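(* Let $m=2^p>2$ and let $r_1,\dots,r_m\in\{1,\dots,m\}$ (repetitions allowed). Let $A$ be the $m\times m$ matrix whose $i$-th row is the $r_i$-th row of $H(m)$. If $b(r_1-1)\oplus b(r_2-1)\oplus\dots\oplus b(r_m-1)=0$, then $\mathrm{perm}\,A\neq0$.
   Context: For $m=2^p$, the Sylvester matrix $H(m)$ is defined recursively by $H(1)=[1]$ and $H(2^p)=\begin{bmatrix}H(2^{p-1})&H(2^{p-1})\\ H(2^{p-1})&-H(2^{p-1})\end{bmatrix}$, rows and columns indexed $1,\dots,m$; equivalently $[H(m)]_{i,j}=(-1)^{b(i-1)\odot b(j-1)}$. Here $b(x)$ denotes the $p$-bit binary representation of $x\in\{0,\dots,m-1\}$, $\odot$ is the bitwise dot product and $\oplus$ is bitwise XOR. $\mathrm{perm}\,A=\sum_{\sigma\in S_m}\prod_{i=1}^m a_{i,\sigma(i)}$. *)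

theory Defs
  imports "HOL-Combinatorics.Permutations"
begin

text \<open>The i-th bit of the p-bit binary representation b(x) is bit x i, for i < p.
  Bitwise dot product of b(x) and b(y), taken mod 2 in the exponent.\<close>
definition bdot :: "nat \<Rightarrow> nat \<Rightarrow> nat \<Rightarrow> nat" where
  "bdot p x y = (\<Sum>k<p. (if bit x k \<and> bit y k then 1 else 0))"

text \<open>Sylvester matrix H(2^p), rows and columns indexed 1..2^p.\<close>
definition sylvester :: "nat \<Rightarrow> nat \<Rightarrow> nat \<Rightarrow> int" where
  "sylvester p i j = (-1) ^ bdot p (i - 1) (j - 1)"

definition perm :: "nat \<Rightarrow> (nat \<Rightarrow> nat \<Rightarrow> int) \<Rightarrow> int" where
  "perm m A = (\<Sum>\<sigma> \<in> {\<sigma>. \<sigma> permutes {1..m}}. \<Prod>i=1..m. A i (\<sigma> i))"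

definition xor_all :: "nat \<Rightarrow> (nat \<Rightarrow> nat) \<Rightarrow> nat" where
  "xor_all m r = foldr (\<lambda>i acc. xor (r i - 1) acc) [1..<m+1] 0"

end

theory Submission
  imports Defs "HOL-Library.FuncSet"
begin

definition bij_ext :: "'a set \<Rightarrow> 'b set \<Rightarrow> ('a \<Rightarrow> 'b) set" where
  "bij_ext I J = {\<sigma>. \<sigma> \<in> extensional I \<and> bij_betw \<sigma> I J}"

definition pm :: "'a set \<Rightarrow> 'b set \<Rightarrow> ('a \<Rightarrow> 'b \<Rightarrow> int) \<Rightarrow> int" where
  "pm I J a = (\<Sum>\<sigma>\<in>bij_ext I J. \<Prod>i\<in>I. a i (\<sigma> i))"

lemma finite_bij_ext: "finite I \<Longrightarrow> finite J \<Longrightarrow> finite (bij_ext I J)"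
proof -
  assume "finite I" "finite J"
  have "bij_ext I J \<subseteq> PiE I (\<lambda>_. J)"
    by (auto simp: bij_ext_def PiE_def bij_betw_def)
  moreover have "finite (PiE I (\<lambda>_. J))" using \<open>finite I\<close> \<open>finite J\<close> by (simp add: finite_PiE)
  ultimately show ?thesis by (rule finite_subset)
qed

lemma pm_reindex_col:
  assumes "bij_betw \<pi> J' J"
  shows "pm I J' (\<lambda>i j. a i (\<pi> j)) = pm I J a"
  unfolding pm_def
proof (rule sum.reindex_bij_witness[where j="\<lambda>\<sigma>. restrict (\<pi> \<circ> \<sigma>) I"
      and i="\<lambda>\<tau>. restrict (inv_into J' \<pi> \<circ> \<tau>) I"])
  fix \<sigma> assume s: "\<sigma> \<in> bij_ext I J'"
  hence e: "\<sigma> \<in> extensional I" and b: "bij_betw \<sigma> I J'" by (auto simp: bij_ext_def)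
  show "restrict (inv_into J' \<pi> \<circ> restrict (\<pi> \<circ> \<sigma>) I) I = \<sigma>"
  proof
    fix x show "restrict (inv_into J' \<pi> \<circ> restrict (\<pi> \<circ> \<sigma>) I) I x = \<sigma> x"
      using e b assms
      by (auto simp: bij_betw_def extensional_def inv_into_f_f)
  qed
  show "restrict (\<pi> \<circ> \<sigma>) I \<in> bij_ext I J"
    unfolding bij_ext_def using b assms
    by (auto intro: bij_betw_trans simp: bij_betw_cong[of I "restrict (\<pi> \<circ> \<sigma>) I" "\<pi> \<circ> \<sigma>"])
  show "(\<Prod>i\<in>I. a i (restrict (\<pi> \<circ> \<sigma>) I i)) = (\<Prod>i\<in>I. a i (\<pi> (\<sigma> i)))"
    by simp
next
  fix \<tau> assume s: "\<tau> \<in> bij_ext I J"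
  hence e: "\<tau> \<in> extensional I" and b: "bij_betw \<tau> I J" by (auto simp: bij_ext_def)
  show "restrict (\<pi> \<circ> restrict (inv_into J' \<pi> \<circ> \<tau>) I) I = \<tau>"
  proof
    fix x show "restrict (\<pi> \<circ> restrict (inv_into J' \<pi> \<circ> \<tau>) I) I x = \<tau> x"
      using e b assms
      by (auto simp: bij_betw_def extensional_def f_inv_into_f)
  qed
  have "bij_betw (inv_into J' \<pi> \<circ> \<tau>) I J'"
    using b assms by (auto intro: bij_betw_trans bij_betw_inv_into)
  then show "restrict (inv_into J' \<pi> \<circ> \<tau>) I \<in> bij_ext I J'"
    unfolding bij_ext_def
    by (auto simp: bij_betw_cong[of I "restrict (inv_into J' \<pi> \<circ> \<tau>) I" "inv_into J' \<pi> \<circ> \<tau>"])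
qed

lemma pm_scale_rows:
  "pm I J (\<lambda>i j. e i * b i j) = (\<Prod>i\<in>I. e i) * pm I J b"
  unfolding pm_def by (simp add: prod.distrib sum_distrib_left)


lemma pm_laplace:
  assumes fin: "finite I" "finite J0" "finite J1" and disj: "J0 \<inter> J1 = {}"
  shows "pm I (J0 \<union> J1) a =
    (\<Sum>R\<in>{R. R \<subseteq> I \<and> card R = card J0}. pm R J0 a * pm (I - R) J1 a)"
proof -
  let ?Rs = "{R. R \<subseteq> I \<and> card R = card J0}"
  let ?S = "Sigma ?Rs (\<lambda>R. bij_ext R J0 \<times> bij_ext (I - R) J1)"
  let ?g = "\<lambda>z. (\<Prod>i\<in>fst z. a i (fst (snd z) i)) * (\<Prod>i\<in>I - fst z. a i (snd (snd z) i))"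
  have finRs: "finite ?Rs" using fin by simp
  have key: "(I \<inter> (\<lambda>i. if i \<in> R then s0 i else s1 i) -` J0,
          restrict (\<lambda>i. if i \<in> R then s0 i else s1 i) (I \<inter> (\<lambda>i. if i \<in> R then s0 i else s1 i) -` J0),
          restrict (\<lambda>i. if i \<in> R then s0 i else s1 i) (I - (I \<inter> (\<lambda>i. if i \<in> R then s0 i else s1 i) -` J0))) = (R, s0, s1)
     \<and> (\<lambda>i. if i \<in> R then s0 i else s1 i) \<in> bij_ext I (J0 \<union> J1)
     \<and> (\<Prod>i\<in>I. a i (if i \<in> R then s0 i else s1 i)) = ?g (R, s0, s1)"
    if z: "(R, s0, s1) \<in> ?S" for R s0 s1
  proof -
    have R: "R \<subseteq> I" and e0: "s0 \<in> extensional R" and b0: "bij_betw s0 R J0"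
      and e1: "s1 \<in> extensional (I - R)" and b1: "bij_betw s1 (I - R) J1"
      using z by (auto simp: bij_ext_def)
    let ?m = "\<lambda>i. if i \<in> R then s0 i else s1 i"
    have pre: "I \<inter> ?m -` J0 = R"
    proof -
      have "s0 ` R \<subseteq> J0" "s1 ` (I - R) \<subseteq> J1" using b0 b1 by (auto simp: bij_betw_def)
      thus ?thesis using R disj by (auto split: if_splits) blast
    qed
    have A1: "(I \<inter> ?m -` J0, restrict ?m (I \<inter> ?m -` J0), restrict ?m (I - (I \<inter> ?m -` J0))) = (R, s0, s1)"
      unfolding pre using e0 e1
      by (auto simp: restrict_def extensional_def fun_eq_iff)
    have bm0: "bij_betw ?m R J0" using b0 by (rule bij_betw_cong[THEN iffD1, rotated]) auto
    have bm1: "bij_betw ?m (I - R) J1" using b1 by (rule bij_betw_cong[THEN iffD1, rotated]) auto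
    have "bij_betw ?m (R \<union> (I - R)) (J0 \<union> J1)" using bm0 bm1 disj by (rule bij_betw_combine)
    moreover have "R \<union> (I - R) = I" using R by auto
    moreover have "?m \<in> extensional I" using e0 e1 R by (auto simp: extensional_def)
    ultimately have A2: "?m \<in> bij_ext I (J0 \<union> J1)" by (simp add: bij_ext_def)
    have "(\<Prod>i\<in>I. a i (?m i)) = (\<Prod>i\<in>I - R. a i (?m i)) * (\<Prod>i\<in>R. a i (?m i))"
      using R fin by (simp add: prod.subset_diff)
    also have "\<dots> = ?g (R, s0, s1)" by (simp add: mult.commute)
    finally have A3: "(\<Prod>i\<in>I. a i (?m i)) = ?g (R, s0, s1)" .
    show ?thesis using A1 A2 A3 by blast
  qed
  have "(\<Sum>R\<in>?Rs. pm R J0 a * pm (I - R) J1 a)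
      = (\<Sum>R\<in>?Rs. \<Sum>p\<in>bij_ext R J0 \<times> bij_ext (I - R) J1.
            (\<Prod>i\<in>R. a i (fst p i)) * (\<Prod>i\<in>I - R. a i (snd p i)))"
    unfolding pm_def sum_product sum.cartesian_product by (simp add: case_prod_beta)
  also have "\<dots> = sum ?g ?S"
    apply (subst sum.Sigma)
    using fin finRs by (auto intro!: finite_bij_ext finite_subset[of _ I] simp: case_prod_beta)
  also have "\<dots> = pm I (J0 \<union> J1) a"
    unfolding pm_def
  proof (rule sum.reindex_bij_witness[where j="\<lambda>z. (\<lambda>i. if i \<in> fst z then fst (snd z) i else snd (snd z) i)"
      and i="\<lambda>\<sigma>. (I \<inter> \<sigma> -` J0, restrict \<sigma> (I \<inter> \<sigma> -` J0), restrict \<sigma> (I - (I \<inter> \<sigma> -` J0)))"])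
    fix z assume z: "z \<in> ?S"
    obtain R s0 s1 where zz: "z = (R, s0, s1)" by (cases z) auto
    have zS: "(R, s0, s1) \<in> ?S" using z zz by simp
    note K = key[OF zS]
    show "(I \<inter> (\<lambda>i. if i \<in> fst z then fst (snd z) i else snd (snd z) i) -` J0,
          restrict (\<lambda>i. if i \<in> fst z then fst (snd z) i else snd (snd z) i) (I \<inter> (\<lambda>i. if i \<in> fst z then fst (snd z) i else snd (snd z) i) -` J0),
          restrict (\<lambda>i. if i \<in> fst z then fst (snd z) i else snd (snd z) i) (I - (I \<inter> (\<lambda>i. if i \<in> fst z then fst (snd z) i else snd (snd z) i) -` J0))) = z"
      unfolding zz fst_conv snd_conv using K by blast
    show "(\<lambda>i. if i \<in> fst z then fst (snd z) i else snd (snd z) i) \<in> bij_ext I (J0 \<union> J1)"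
      unfolding zz fst_conv snd_conv using K by blast
    show "(\<Prod>i\<in>I. a i ((\<lambda>i. if i \<in> fst z then fst (snd z) i else snd (snd z) i) i)) = ?g z"
      using K unfolding zz prod.sel by (simp only: conj_assoc)
  next
    fix \<sigma> assume s: "\<sigma> \<in> bij_ext I (J0 \<union> J1)"
    hence e: "\<sigma> \<in> extensional I" and b: "bij_betw \<sigma> I (J0 \<union> J1)" by (auto simp: bij_ext_def)
    let ?R = "I \<inter> \<sigma> -` J0"
    show "(\<lambda>i. if i \<in> fst (?R, restrict \<sigma> ?R, restrict \<sigma> (I - ?R))
            then fst (snd (?R, restrict \<sigma> ?R, restrict \<sigma> (I - ?R))) i
            else snd (snd (?R, restrict \<sigma> ?R, restrict \<sigma> (I - ?R))) i) = \<sigma>"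
      using e by (auto simp: fun_eq_iff extensional_def)
    have inj: "inj_on \<sigma> I" and im: "\<sigma> ` I = J0 \<union> J1" using b by (auto simp: bij_betw_def)
    have "\<sigma> ` ?R = \<sigma> ` I \<inter> J0" by blast
    hence im0: "\<sigma> ` ?R = J0" using im by simp
    have "\<sigma> ` (I - ?R) = \<sigma> ` I - J0" by blast
    hence im1: "\<sigma> ` (I - ?R) = J1" using im disj by auto
    have b0: "bij_betw \<sigma> ?R J0" using inj im0 by (auto simp: bij_betw_def intro: inj_on_subset)
    have b1: "bij_betw \<sigma> (I - ?R) J1" using inj im1 by (auto simp: bij_betw_def intro: inj_on_subset)
    have "card ?R = card J0" using b0 by (rule bij_betw_same_card)
    moreover have "restrict \<sigma> ?R \<in> bij_ext ?R J0"
      using b0 by (simp add: bij_ext_def bij_betw_cong[of ?R "restrict \<sigma> ?R" \<sigma>])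
    moreover have "restrict \<sigma> (I - ?R) \<in> bij_ext (I - ?R) J1"
      using b1 by (simp add: bij_ext_def bij_betw_cong[of "I - ?R" "restrict \<sigma> (I - ?R)" \<sigma>])
    ultimately show "(?R, restrict \<sigma> ?R, restrict \<sigma> (I - ?R)) \<in> ?S" by auto
  qed
  finally show ?thesis ..
qed


lemma nbit_ge: "(x::nat) < 2 ^ q \<Longrightarrow> q \<le> k \<Longrightarrow> \<not> bit x k"
  by (metis bit_take_bit_iff leD take_bit_nat_eq_self_iff)

lemma xor_bound: "(y::nat) < 2 ^ q \<Longrightarrow> k < q \<Longrightarrow> xor y (2 ^ k) < 2 ^ q"
proof -
  assume a: "y < 2 ^ q" "k < q"
  have "take_bit q (xor y (2 ^ k)) = xor (take_bit q y) (take_bit q (2 ^ k))"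
    by (simp add: take_bit_xor)
  also have "\<dots> = xor y (2 ^ k)"
  proof -
    have "take_bit q y = y" using a by (simp add: take_bit_nat_eq_self_iff)
    thus ?thesis using a by simp
  qed
  finally show ?thesis by (metis take_bit_nat_eq_self_iff)
qed

lemma perm_pm: "(\<Sum>\<sigma>\<in>{\<sigma>. \<sigma> permutes S}. \<Prod>i\<in>S. a i (\<sigma> i)) = pm S S a"
  unfolding pm_def
proof (rule sum.reindex_bij_witness[where j="\<lambda>\<sigma>. restrict \<sigma> S"
      and i="\<lambda>\<tau> x. if x \<in> S then \<tau> x else x"])
  fix \<sigma> assume "\<sigma> \<in> {\<sigma>. \<sigma> permutes S}"
  hence p: "\<sigma> permutes S" by simp
  show "(\<lambda>x. if x \<in> S then restrict \<sigma> S x else x) = \<sigma>"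
    using p by (auto simp: fun_eq_iff permutes_def)
  show "restrict \<sigma> S \<in> bij_ext S S"
    using permutes_imp_bij[OF p] by (simp add: bij_ext_def bij_betw_cong[of S "restrict \<sigma> S" \<sigma>])
  show "(\<Prod>i\<in>S. a i (restrict \<sigma> S i)) = (\<Prod>i\<in>S. a i (\<sigma> i))" by simp
next
  fix \<tau> assume "\<tau> \<in> bij_ext S S"
  hence e: "\<tau> \<in> extensional S" and b: "bij_betw \<tau> S S" by (auto simp: bij_ext_def)
  show "restrict (\<lambda>x. if x \<in> S then \<tau> x else x) S = \<tau>"
    using e by (auto simp: fun_eq_iff extensional_def)
  have "bij_betw (\<lambda>x. if x \<in> S then \<tau> x else x) S S"
    using b by (rule bij_betw_cong[THEN iffD1, rotated]) auto
  thus "(\<lambda>x. if x \<in> S then \<tau> x else x) \<in> {\<sigma>. \<sigma> permutes S}"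
    by (auto intro: bij_imp_permutes)
qed

lemma pm_const1:
  assumes "finite I" "finite J" "card I = card J"
  shows "pm I J (\<lambda>i j. 1) = fact (card I)"
proof -
  obtain h where h: "bij_betw h I J" using assms finite_same_card_bij by blast
  have "pm I J (\<lambda>i j. 1) = pm I I (\<lambda>i j. 1)"
    using pm_reindex_col[OF h, of I "\<lambda>i j. 1"] by simp
  also have "\<dots> = (\<Sum>\<sigma>\<in>{\<sigma>. \<sigma> permutes I}. \<Prod>i\<in>I. 1)" using perm_pm[where S=I and a="\<lambda>i j. 1"] by simp
  also have "\<dots> = fact (card I)" using assms by (simp add: card_permutations)
  finally show ?thesis .
qed

definition ch :: "nat \<Rightarrow> nat \<Rightarrow> nat \<Rightarrow> int" where
  "ch q x y = (\<Prod>k<q. if bit x k \<and> bit y k then -1 else 1)"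

lemma ch_Suc_split:
  assumes "b \<le> 1"
  shows "ch (Suc q) x (2 * y + b) = (if odd x \<and> b = 1 then -1 else 1) * ch q (x div 2) y"
proof -
  have b0: "bit (2 * y + b) 0 \<longleftrightarrow> b = 1" using assms by (cases "b = 0") (auto simp: bit_0)
  have bs: "bit (2 * y + b) (Suc k) \<longleftrightarrow> bit y k" for k
    using assms by (simp add: bit_Suc)
  show ?thesis unfolding ch_def prod.lessThan_Suc_shift
    by (simp add: b0 bs bit_Suc[of x] bit_0[of x])
qed

lemma ch_xor:
  assumes "k < q"
  shows "ch q x (xor y (2 ^ k)) = (if bit x k then -1 else 1) * ch q x y"
proof -
  have "ch q x (xor y (2 ^ k)) = (\<Prod>j<q. (if j = k then (if bit x k then -1 else 1) else 1) *
          (if bit x j \<and> bit y j then -1 else 1))"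
    unfolding ch_def by (rule prod.cong) (auto simp: bit_xor_iff bit_exp_iff)
  also have "\<dots> = (\<Prod>j<q. (if j = k then (if bit x k then -1 else 1) else 1)) * ch q x y"
    unfolding ch_def by (rule prod.distrib)
  also have "(\<Prod>j<q. (if j = k then (if bit x k then -1 else 1) else 1)) = (if bit x k then -1 else (1::int))"
    using assms by (subst prod.delta) auto
  finally show ?thesis .
qed

lemma prod_sign: "finite I \<Longrightarrow> (\<Prod>i\<in>I. if P i then -1 else 1) = ((-1::int) ^ card {i\<in>I. P i})"
  by (simp add: prod.If_cases Int_def conj_commute)


lemma pm_cong:
  assumes "\<And>i j. i \<in> I \<Longrightarrow> j \<in> J \<Longrightarrow> a i j = b i j"
  shows "pm I J a = pm I J b"
  unfolding pm_def
proof (rule sum.cong[OF refl], rule prod.cong[OF refl])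
  fix \<sigma> i assume "\<sigma> \<in> bij_ext I J" "i \<in> I"
  hence "\<sigma> i \<in> J" by (auto simp: bij_ext_def bij_betw_def)
  thus "a i (\<sigma> i) = b i (\<sigma> i)" using assms \<open>i \<in> I\<close> by simp
qed

lemma pair_dvd:
  fixes g :: "'a \<Rightarrow> int"
  assumes "finite S"
    and "\<And>x. x \<in> S \<Longrightarrow> \<iota> x \<in> S \<and> \<iota> (\<iota> x) = x \<and> \<iota> x \<noteq> x \<and> g (\<iota> x) = g x \<and> d dvd g x"
  shows "2 * d dvd sum g S"
  using assms
proof (induction "card S" arbitrary: S rule: less_induct)
  case less
  show ?case
  proof (cases "S = {}")
    case True thus ?thesis by simp
  next
    case False
    then obtain x where x: "x \<in> S" by auto
    have ix: "\<iota> x \<in> S" "\<iota> x \<noteq> x" "g (\<iota> x) = g x" "d dvd g x" using less.prems(2)[OF x] by auto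
    let ?S' = "S - {x, \<iota> x}"
    have "sum g S = g x + sum g (S - {x})" using less.prems(1) x by (simp add: sum.remove)
    also have "sum g (S - {x}) = g (\<iota> x) + sum g (S - {x} - {\<iota> x})"
      using less.prems(1) ix by (subst sum.remove[of _ "\<iota> x"]) auto
    also have "S - {x} - {\<iota> x} = ?S'" by auto
    finally have eq: "sum g S = 2 * g x + sum g ?S'" using ix by simp
    have "card ?S' < card S" using less.prems(1) x by (intro psubset_card_mono) auto
    moreover have "\<And>y. y \<in> ?S' \<Longrightarrow> \<iota> y \<in> ?S' \<and> \<iota> (\<iota> y) = y \<and> \<iota> y \<noteq> y \<and> g (\<iota> y) = g y \<and> d dvd g y"
    proof -
      fix y assume y: "y \<in> ?S'"
      have P: "\<iota> y \<in> S \<and> \<iota> (\<iota> y) = y \<and> \<iota> y \<noteq> y \<and> g (\<iota> y) = g y \<and> d dvd g y"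
        using less.prems(2) y by auto
      have "\<iota> (\<iota> x) = x" using less.prems(2)[OF x] by auto
      hence "\<iota> y \<noteq> x" "\<iota> y \<noteq> \<iota> x" using y P by auto
      thus "\<iota> y \<in> ?S' \<and> \<iota> (\<iota> y) = y \<and> \<iota> y \<noteq> y \<and> g (\<iota> y) = g y \<and> d dvd g y" using P by auto
    qed
    ultimately have "2 * d dvd sum g ?S'" using less.hyps less.prems(1) by auto
    moreover have "2 * d dvd 2 * g x" using ix by simp
    ultimately show ?thesis using eq by simp
  qed
qed

lemma fact_double: "fact (2 * n) = (2::nat) ^ n * fact n * (\<Prod>i<n. 2 * i + 1)"
proof (induction n)
  case 0 then show ?case by simp
next
  case (Suc n)
  have "fact (2 * Suc n) = (2 * n + 2) * (2 * n + 1) * (fact (2 * n) :: nat)"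
    by (simp add: fact_Suc algebra_simps)
  also have "\<dots> = 2 ^ Suc n * fact (Suc n) * (\<Prod>i<Suc n. 2 * i + 1)"
    using Suc by (simp add: fact_Suc algebra_simps)
  finally show ?case .
qed

lemma odd_prod: "odd (\<Prod>i<n. 2 * i + (1::nat))"
proof (induction n)
  case 0 show ?case by simp
next
  case (Suc n)
  have "(\<Prod>i<Suc n. 2 * i + (1::nat)) = (\<Prod>i<n. 2 * i + 1) * (2 * n + 1)" by simp
  thus ?case using Suc by simp
qed

lemma fact_pow2: "\<exists>u. odd u \<and> fact (2 ^ k) = (2::nat) ^ (2 ^ k - 1) * u"
proof (induction k)
  case 0 then show ?case by simp
next
  case (Suc k)
  then obtain u where u: "odd u" "fact (2 ^ k) = (2::nat) ^ (2 ^ k - 1) * u" by blast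
  have "fact (2 ^ Suc k) = (fact (2 * 2 ^ k) :: nat)" by simp
  also have "\<dots> = 2 ^ (2 ^ k) * fact (2 ^ k) * (\<Prod>i<2 ^ k. 2 * i + 1)" by (rule fact_double)
  also have "\<dots> = 2 ^ (2 ^ k + (2 ^ k - 1)) * (u * (\<Prod>i<2 ^ k. 2 * i + 1))"
    using u by (simp only: power_add mult_ac)
  also have "2 ^ k + (2 ^ k - 1) = 2 ^ Suc k - (1::nat)"
    by (simp add: Suc_leI)
  finally have eq: "fact (2 ^ Suc k) = (2::nat) ^ (2 ^ Suc k - 1) * (u * (\<Prod>i<2 ^ k. 2 * i + 1))" .
  have "odd (u * (\<Prod>i<2 ^ k. 2 * i + (1::nat)))" using u(1) odd_prod by simp
  with eq show ?case by (intro exI[of _ "u * (\<Prod>i<2 ^ k. 2 * i + 1)"]) simp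
qed

lemma fact_pow2_dvd: "(2::int) ^ (2 ^ k - 1) dvd fact (2 ^ k)"
proof -
  obtain u where "fact (2 ^ k) = (2::nat) ^ (2 ^ k - 1) * u" using fact_pow2 by blast
  hence "(fact (2 ^ k) :: int) = 2 ^ (2 ^ k - 1) * int u"
    by (metis of_nat_fact of_nat_mult of_nat_numeral of_nat_power)
  thus ?thesis by simp
qed

lemma fact_pow2_ndvd: "\<not> (2::int) ^ (2 ^ k) dvd fact (2 ^ k)"
proof
  assume d: "(2::int) ^ (2 ^ k) dvd fact (2 ^ k)"
  obtain u where u: "odd u" "fact (2 ^ k) = (2::nat) ^ (2 ^ k - 1) * u" using fact_pow2 by blast
  hence "(fact (2 ^ k) :: int) = 2 ^ (2 ^ k - 1) * int u"
    by (metis of_nat_fact of_nat_mult of_nat_numeral of_nat_power)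
  moreover have "(2::int) ^ (2 ^ k) = 2 ^ (2 ^ k - 1) * 2"
  proof -
    have e: "Suc (2 ^ k - 1) = (2::nat) ^ k" by simp
    have "(2::int) ^ Suc (2 ^ k - 1) = 2 ^ (2 ^ k - 1) * 2" by (rule power_Suc2)
    thus ?thesis by (simp only: e)
  qed
  ultimately have "(2::int) ^ (2 ^ k - 1) * 2 dvd 2 ^ (2 ^ k - 1) * int u" using d by simp
  hence "(2::int) dvd int u" by (subst (asm) dvd_times_left_cancel_iff) auto
  thus False using u by simp
qed


definition cols :: "nat \<Rightarrow> nat \<Rightarrow> (nat \<times> nat) set" where
  "cols c q = {..<c} \<times> {..<(2::nat) ^ q}"

definition FF :: "nat \<Rightarrow> nat \<Rightarrow> ('a \<Rightarrow> nat) \<Rightarrow> 'a set \<Rightarrow> int" where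
  "FF c q X I = pm I (cols c q) (\<lambda>i j. ch q (X i) (snd j))"

definition good :: "'a set \<Rightarrow> ('a \<Rightarrow> nat) \<Rightarrow> bool" where
  "good I X = (\<forall>k. even (card {i\<in>I. bit (X i) k}))"

lemma finite_cols[simp]: "finite (cols c q)" by (simp add: cols_def)
lemma card_cols[simp]: "card (cols c q) = c * 2 ^ q" by (simp add: cols_def card_cartesian_product)

lemma FF_bad:
  assumes fin: "finite I" and bd: "\<forall>i\<in>I. X i < 2 ^ q" and ng: "\<not> good I X"
  shows "FF c q X I = 0"
proof -
  obtain k where k: "odd (card {i\<in>I. bit (X i) k})" using ng by (auto simp: good_def)
  have kq: "k < q"
  proof (rule ccontr)
    assume "\<not> k < q"
    hence e: "{i\<in>I. bit (X i) k} = {}" using bd nbit_ge by fastforce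
    show False using k unfolding e by simp
  qed
  let ?J = "cols c q"
  let ?\<pi> = "\<lambda>j::nat\<times>nat. (fst j, xor (snd j) (2 ^ k))"
  have bij: "bij_betw ?\<pi> ?J ?J"
    by (rule bij_betw_byWitness[where f'="?\<pi>"]) (auto simp: cols_def xor_bound kq xor.assoc)
  have "FF c q X I = pm I ?J (\<lambda>i j. ch q (X i) (snd (?\<pi> j)))"
    unfolding FF_def using pm_reindex_col[OF bij, of I "\<lambda>i j. ch q (X i) (snd j)"] by simp
  also have "\<dots> = pm I ?J (\<lambda>i j. (if bit (X i) k then -1 else 1) * ch q (X i) (snd j))"
    by (rule pm_cong) (simp add: ch_xor kq)
  also have "\<dots> = (\<Prod>i\<in>I. if bit (X i) k then -1 else 1) * FF c q X I"
    unfolding FF_def by (rule pm_scale_rows)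
  also have "(\<Prod>i\<in>I. if bit (X i) k then -1 else (1::int)) = -1"
    using k fin by (simp add: prod_sign)
  finally show ?thesis by simp
qed


lemma ch_0[simp]: "ch 0 x y = 1" by (simp add: ch_def)

lemma sg_pm1: "finite T \<Longrightarrow> (\<Prod>i\<in>T. if P i then -1 else 1) = (1::int) \<or> (\<Prod>i\<in>T. if P i then -1 else 1) = (-1::int)"
  by (simp add: prod_sign) (metis neg_one_even_power neg_one_odd_power)

lemma main:
  "finite I \<Longrightarrow> card I = 2 ^ (s + q) \<Longrightarrow> (\<forall>i\<in>I. X i < 2 ^ q) \<Longrightarrow> good I X \<Longrightarrow>
   (2::int) ^ (2 ^ (s + q)) dvd FF (2 ^ s) q X I - fact (2 ^ (s + q))"
proof (induction q arbitrary: s I X)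
  case 0
  have "FF (2 ^ s) 0 X I = pm I (cols (2 ^ s) 0) (\<lambda>i j. 1)" by (simp add: FF_def)
  also have "\<dots> = fact (card I)" using 0 by (intro pm_const1) auto
  finally show ?case using 0 by simp
next
  case (Suc q)
  note fin = Suc.prems(1) and cardI = Suc.prems(2) and bd = Suc.prems(3) and gd = Suc.prems(4)
  define X' where "X' = (\<lambda>i. X i div 2)"
  define M where "M = (2::nat) ^ (s + q)"
  define G where "G = (\<lambda>T. FF (2 ^ s) q X' T)"
  define sg where "sg = (\<lambda>T. \<Prod>i\<in>T. if odd (X i) then -1 else (1::int))"
  define J0 where "J0 = {j \<in> cols (2 ^ s) (Suc q). even (snd j)}"
  define J1 where "J1 = {j \<in> cols (2 ^ s) (Suc q). odd (snd j)}"
  define a where "a = (\<lambda>i (j::nat\<times>nat). ch (Suc q) (X i) (snd j))"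
  define Rs where "Rs = {R. R \<subseteq> I \<and> card R = M}"
  have cI: "card I = 2 * M" using cardI by (simp add: M_def)
  have Mpos: "M \<ge> 1" by (simp add: M_def)
  have bij0: "bij_betw (\<lambda>j. (fst j, 2 * snd j)) (cols (2 ^ s) q) J0"
    by (rule bij_betw_byWitness[where f'="\<lambda>j. (fst j, snd j div 2)"]) (auto simp: J0_def cols_def)
  have bij1: "bij_betw (\<lambda>j. (fst j, 2 * snd j + 1)) (cols (2 ^ s) q) J1"
    by (rule bij_betw_byWitness[where f'="\<lambda>j. (fst j, snd j div 2)"]) (auto simp: J1_def cols_def)
  have cJ0: "card J0 = M" using bij_betw_same_card[OF bij0] by (simp add: M_def power_add)
  have JJ: "cols (2 ^ s) (Suc q) = J0 \<union> J1" by (auto simp: J0_def J1_def)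
  have dJ: "J0 \<inter> J1 = {}" by (auto simp: J0_def J1_def)
  have finJ: "finite J0" "finite J1" by (auto simp: J0_def J1_def)
  have P0: "pm T J0 a = G T" for T
  proof -
    have "pm T J0 a = pm T (cols (2 ^ s) q) (\<lambda>i j. a i (fst j, 2 * snd j))"
      using pm_reindex_col[OF bij0, of T a] by simp
    also have "\<dots> = G T" unfolding G_def FF_def a_def
      by (rule pm_cong) (use ch_Suc_split[of 0 q _ ] in \<open>simp add: X'_def\<close>)
    finally show ?thesis .
  qed
  have P1: "pm T J1 a = sg T * G T" for T
  proof -
    have "pm T J1 a = pm T (cols (2 ^ s) q) (\<lambda>i j. a i (fst j, 2 * snd j + 1))"
      using pm_reindex_col[OF bij1, of T a] by simp
    also have "\<dots> = pm T (cols (2 ^ s) q) (\<lambda>i j. (if odd (X i) then -1 else 1) * ch q (X' i) (snd j))"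
      unfolding a_def
      by (rule pm_cong) (use ch_Suc_split[of 1 q _ ] in \<open>simp add: X'_def\<close>)
    also have "\<dots> = sg T * G T" unfolding G_def FF_def sg_def by (rule pm_scale_rows)
    finally show ?thesis .
  qed
  have E1: "FF (2 ^ s) (Suc q) X I = (\<Sum>R\<in>Rs. G R * (sg (I - R) * G (I - R)))"
  proof -
    have "FF (2 ^ s) (Suc q) X I = pm I (J0 \<union> J1) a" unfolding FF_def JJ a_def ..
    also have "\<dots> = (\<Sum>R\<in>Rs. pm R J0 a * pm (I - R) J1 a)"
      unfolding Rs_def cJ0[symmetric] using fin finJ dJ by (rule pm_laplace)
    finally show ?thesis by (simp add: P0 P1)
  qed
  define K1 where "K1 = {(2::nat) ^ s..<2 ^ Suc s} \<times> {..<(2::nat) ^ q}"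
  have bijK: "bij_betw (\<lambda>j. (fst j + 2 ^ s, snd j)) (cols (2 ^ s) q) K1"
    by (rule bij_betw_byWitness[where f'="\<lambda>j. (fst j - 2 ^ s, snd j)"]) (auto simp: K1_def cols_def)
  have E2: "FF (2 ^ Suc s) q X' I = (\<Sum>R\<in>Rs. G R * G (I - R))"
  proof -
    let ?b = "\<lambda>i (j::nat\<times>nat). ch q (X' i) (snd j)"
    have KK: "cols (2 ^ Suc s) q = cols (2 ^ s) q \<union> K1" by (auto simp: K1_def cols_def)
    have dK: "cols (2 ^ s) q \<inter> K1 = {}" by (auto simp: K1_def cols_def)
    have cK: "card (cols (2 ^ s) q) = M" by (simp add: M_def power_add)
    have "FF (2 ^ Suc s) q X' I = pm I (cols (2 ^ s) q \<union> K1) ?b" unfolding FF_def KK ..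
    also have "\<dots> = (\<Sum>R\<in>Rs. pm R (cols (2 ^ s) q) ?b * pm (I - R) K1 ?b)"
      unfolding Rs_def cK[symmetric] using fin by (intro pm_laplace) (auto simp: K1_def cols_def)
    also have "\<dots> = (\<Sum>R\<in>Rs. G R * G (I - R))"
    proof (rule sum.cong[OF refl])
      fix R
      have "pm (I - R) K1 ?b = pm (I - R) (cols (2 ^ s) q) (\<lambda>i j. ?b i (fst j + 2 ^ s, snd j))"
        using pm_reindex_col[OF bijK, of "I - R" ?b] by simp
      thus "pm R (cols (2 ^ s) q) ?b * pm (I - R) K1 ?b = G R * G (I - R)"
        by (simp add: G_def FF_def)
    qed
    finally show ?thesis .
  qed
  have bd': "\<forall>i\<in>I. X' i < 2 ^ q" using bd by (auto simp: X'_def)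
  have gd': "good T X'" if "good T X" for T
    using that unfolding good_def X'_def by (simp add: bit_Suc[symmetric])
  have IH2: "(2::int) ^ (2 * M) dvd FF (2 ^ Suc s) q X' I - fact (2 * M)"
    using Suc.IH[of I "Suc s" X'] fin cardI bd' gd'[OF gd] by (simp add: M_def)
  have Gdvd: "(2::int) ^ (M - 1) dvd G T" if T: "T \<subseteq> I" "card T = M" for T
  proof (cases "good T X'")
    case True
    have fT: "finite T" using T fin finite_subset by blast
    have "(2::int) ^ M dvd G T - fact M"
    proof -
      have "\<forall>i\<in>T. X' i < 2 ^ q" using bd' T by blast
      thus ?thesis using Suc.IH[of T s X'] fT T True by (auto simp: M_def G_def)
    qed
    moreover have "(2::int) ^ (M - 1) dvd 2 ^ M" by (simp add: le_imp_power_dvd)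
    ultimately have "(2::int) ^ (M - 1) dvd G T - fact M" using dvd_trans by blast
    moreover have "(2::int) ^ (M - 1) dvd fact M" unfolding M_def by (rule fact_pow2_dvd)
    ultimately show ?thesis using dvd_add by fastforce
  next
    case False
    have fT: "finite T" using T fin finite_subset by blast
    have "G T = 0" unfolding G_def using fT bd' T False by (intro FF_bad) auto
    thus ?thesis by simp
  qed
  have sgI: "sg I = 1"
  proof -
    have "even (card {i\<in>I. bit (X i) 0})" using gd by (simp add: good_def)
    thus ?thesis unfolding sg_def using fin by (simp add: prod_sign bit_0)
  qed
  have sgc: "sg (I - R) = sg R" if "R \<subseteq> I" for R
  proof -
    have fR: "finite R" using that fin finite_subset by blast
    have "sg I = sg (I - R) * sg R" unfolding sg_def using that fin by (rule prod.subset_diff)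
    moreover have "sg R = 1 \<or> sg R = -1" unfolding sg_def using fR by (rule sg_pm1)
    moreover have "sg (I - R) = 1 \<or> sg (I - R) = -1" unfolding sg_def using fin by (intro sg_pm1) auto
    ultimately show ?thesis using sgI by auto
  qed
  define g where "g = (\<lambda>R. (sg (I - R) - 1) * G R * G (I - R))"
  have pair: "2 * 2 ^ (2 * M - 1) dvd sum g Rs"
  proof (rule pair_dvd[where \<iota>="\<lambda>R. I - R"])
    show "finite Rs" using fin by (simp add: Rs_def)
    fix R assume R: "R \<in> Rs"
    hence RI: "R \<subseteq> I" and cR: "card R = M" by (auto simp: Rs_def)
    have fR: "finite R" using RI fin finite_subset by blast
    have cIR: "card (I - R) = M" using cR cI RI fin by (simp add: card_Diff_subset fR)
    have "I - R \<in> Rs" using cIR by (simp add: Rs_def)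
    moreover have "I - (I - R) = R" using RI by auto
    moreover have "I - R \<noteq> R"
    proof
      assume "I - R = R" hence "R = {}" by auto
      thus False using cR Mpos by simp
    qed
    moreover have "g (I - R) = g R"
      unfolding g_def using sgc[OF RI] \<open>I - (I - R) = R\<close> by simp
    moreover have "2 ^ (2 * M - 1) dvd g R"
    proof -
      have "2 dvd sg (I - R) - 1" using sgc[OF RI] sg_pm1[of R "\<lambda>i. odd (X i)"] fR
        by (auto simp: sg_def)
      moreover have "(2::int) ^ (M - 1) dvd G R" using Gdvd RI cR by blast
      moreover have "(2::int) ^ (M - 1) dvd G (I - R)" using Gdvd cIR by blast
      ultimately have "2 * 2 ^ (M - 1) * 2 ^ (M - 1) dvd g R"
        unfolding g_def by (intro mult_dvd_mono) auto
      moreover have "2 * 2 ^ (M - 1) * 2 ^ (M - 1) = (2::int) ^ (2 * M - 1)"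
      proof -
        have e: "2 * M - 1 = Suc ((M - 1) + (M - 1))" using Mpos by simp
        show ?thesis unfolding e power_Suc power_add by (simp only: mult.assoc)
      qed
      ultimately show ?thesis by simp
    qed
    ultimately show "I - R \<in> Rs \<and> I - (I - R) = R \<and> I - R \<noteq> R \<and> g (I - R) = g R \<and> 2 ^ (2 * M - 1) dvd g R"
      by blast
  qed
  have p2: "2 * 2 ^ (2 * M - 1) = (2::int) ^ (2 * M)"
  proof -
    have "2 * M = Suc (2 * M - 1)" using Mpos by simp
    hence "(2::int) ^ (2 * M) = 2 ^ Suc (2 * M - 1)" by (metis)
    thus ?thesis by simp
  qed
  have sgE: "sum g Rs = (\<Sum>R\<in>Rs. G R * (sg (I - R) * G (I - R))) - (\<Sum>R\<in>Rs. G R * G (I - R))"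
    unfolding g_def by (subst sum_subtractf[symmetric], rule sum.cong) (simp_all add: algebra_simps)
  have eqD: "FF (2 ^ s) (Suc q) X I - fact (2 * M) = sum g Rs + (FF (2 ^ Suc s) q X' I - fact (2 * M))"
    unfolding E1 E2 sgE by simp
  have d1: "(2::int) ^ (2 * M) dvd sum g Rs" using pair p2 by simp
  have "(2::int) ^ (2 * M) dvd FF (2 ^ s) (Suc q) X I - fact (2 * M)"
    unfolding eqD by (rule dvd_add[OF d1 IH2])
  moreover have "2 ^ (s + Suc q) = 2 * M" by (simp add: M_def)
  ultimately show ?case by simp
qed

lemma foldr_xor_bit:
  "distinct xs \<Longrightarrow> bit (foldr (\<lambda>i acc. xor (r i - 1) acc) xs 0) k = odd (card {i \<in> set xs. bit (r i - 1) k})"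
proof (induction xs)
  case Nil then show ?case by simp
next
  case (Cons a xs)
  have fin: "finite {i \<in> set xs. bit (r i - 1) k}" by simp
  have na: "a \<notin> {i \<in> set xs. bit (r i - 1) k}" using Cons.prems by simp
  have "{i \<in> set (a # xs). bit (r i - 1) k} =
        (if bit (r a - 1) k then insert a {i \<in> set xs. bit (r i - 1) k} else {i \<in> set xs. bit (r i - 1) k})"
    by auto
  hence "card {i \<in> set (a # xs). bit (r i - 1) k} =
        (if bit (r a - 1) k then Suc (card {i \<in> set xs. bit (r i - 1) k}) else card {i \<in> set xs. bit (r i - 1) k})"
    using card_insert_disjoint[OF fin na] by (simp only: split: if_splits) simp_all
  thus ?case using Cons by (simp add: bit_xor_iff)
qed

lemma bdot_ch: "(-1::int) ^ bdot p x y = ch p x y"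
  unfolding bdot_def ch_def power_sum by (rule prod.cong) auto

theorem proposition6:
  fixes p :: nat and r :: "nat \<Rightarrow> nat"
  assumes "(2::nat) ^ p > 2"
    and "\<forall>i\<in>{1..2^p}. r i \<in> {1..2^p}"
    and "xor_all (2^p) r = 0"
  shows "perm (2^p) (\<lambda>i j. sylvester p (r i) j) \<noteq> 0"
proof -
  define m where "m = (2::nat) ^ p"
  define X where "X = (\<lambda>i. r i - 1)"
  define A where "A = (\<lambda>i j. sylvester p (r i) j)"
  have bij: "bij_betw (\<lambda>j. snd j + 1) (cols 1 p) {1..m}"
    by (rule bij_betw_byWitness[where f'="\<lambda>j. (0, j - 1)"]) (auto simp: cols_def m_def)
  have "perm m A = pm {1..m} {1..m} A"
    unfolding perm_def using perm_pm[where S="{1..m}" and a=A] by simp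
  also have "\<dots> = pm {1..m} (cols 1 p) (\<lambda>i j. A i (snd j + 1))"
    using pm_reindex_col[OF bij, of "{1..m}" A] by simp
  also have "\<dots> = FF 1 p X {1..m}"
    unfolding FF_def A_def sylvester_def X_def
    by (rule pm_cong) (simp add: bdot_ch)
  finally have pe: "perm m A = FF 1 p X {1..m}" .
  have gd: "good {1..m} X"
    unfolding good_def
  proof
    fix k
    have s: "set [1..<m+1] = {1..m}" by auto
    have "bit (xor_all m r) k = odd (card {i \<in> {1..m}. bit (r i - 1) k})"
      unfolding xor_all_def s[symmetric] by (rule foldr_xor_bit) simp
    moreover have "xor_all m r = 0" using assms(3) by (simp add: m_def)
    ultimately show "even (card {i \<in> {1..m}. bit (X i) k})"
      unfolding X_def by simp
  qed
  have bd: "\<forall>i\<in>{1..m}. X i < 2 ^ p" using assms(2) by (auto simp: X_def m_def)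
  have "(2::int) ^ (2 ^ (0 + p)) dvd FF (2 ^ 0) p X {1..m} - fact (2 ^ (0 + p))"
    using main[of "{1..m}" 0 p X] gd bd by (simp add: m_def)
  hence d: "(2::int) ^ m dvd FF 1 p X {1..m} - fact m" by (simp add: m_def)
  show ?thesis
  proof
    assume "perm (2^p) (\<lambda>i j. sylvester p (r i) j) = 0"
    hence "FF 1 p X {1..m} = 0" using pe by (simp add: m_def A_def)
    hence "(2::int) ^ m dvd fact m" using d by simp
    thus False using fact_pow2_ndvd[of p] by (simp add: m_def)
  qed
qed

end
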